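(* Let $\phi$ be an $N$-affine equivariant additive integrator map satisfying the consistency condition $\phi(hf^{[1]},\ldots,hf^{[N]})=hf+o(h)$ as $h\to0$, where $f=f^{[1]}+\cdots+f^{[N]}$. If $f^{[\nu]}$ is a constant vector field for every $\nu=1,\ldots,N$, then $\phi(f^{[1]},\ldots,f^{[N]})=f$.
   Context: All spaces are real Banach spaces; $\mathfrak X(Y)$ denotes smooth vector fields on $Y$. For fixed $N$, an additive integrator map $\phi$ is a collection of smooth maps $\phi_Y\colon\mathfrak X(Y)^N\to\mathfrak X(Y)$, one per Banach space $Y$. For Gâteaux differentiable $\chi$, $f\sim_\chi g$ means $\chi'(y)f(y)=g(\chi(y))$ for all $y$. $\phi$ is $N$-affine equivariant if for every affine map $A$ between Banach spaces, $f^{[\nu]}\sim_A g^{[\nu]}$ for all $\nu$ implies $\phi(f^{[1]},\ldots,f^{[N]})\sim_A\phi(g^{[1]},\ldots,g^{[N]})$. *)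

theory Defs
  imports "HOL-Analysis.Analysis"
begin

text \<open>Bounded n-linear maps are represented as functions of an argument sequence
  v :: nat \<Rightarrow> 'a, of which only the entries v 0, ..., v (n-1) matter.\<close>

definition multilin_bounded :: "nat \<Rightarrow> ((nat \<Rightarrow> 'a::real_normed_vector) \<Rightarrow> 'b::real_normed_vector) \<Rightarrow> bool" where
  "multilin_bounded n M \<longleftrightarrow>
     (\<forall>i<n. \<forall>v. linear (\<lambda>w. M (v(i := w)))) \<and>
     (\<forall>v. M v = M (\<lambda>i. if i < n then v i else 0)) \<and>
     (\<exists>K. \<forall>v. norm (M v) \<le> K * (\<Prod>i<n. norm (v i)))"

definition mlnorm :: "nat \<Rightarrow> ((nat \<Rightarrow> 'a::real_normed_vector) \<Rightarrow> 'b::real_normed_vector) \<Rightarrow> real" where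
  "mlnorm n M = (SUP v\<in>{v. \<forall>i<n. norm (v i) \<le> 1}. norm (M v))"

text \<open>Smooth (C-infinity) maps between normed spaces: Frechet differentiable of all
  orders, D n x being the n-th derivative at x (a bounded n-linear map), and D (Suc n)
  being the Frechet derivative of x \<mapsto> D n x in operator norm.\<close>

definition smooth :: "('a::real_normed_vector \<Rightarrow> 'b::real_normed_vector) \<Rightarrow> bool" where
  "smooth f \<longleftrightarrow> (\<exists>D :: nat \<Rightarrow> 'a \<Rightarrow> (nat \<Rightarrow> 'a) \<Rightarrow> 'b.
      (\<forall>x v. D 0 x v = f x) \<and>
      (\<forall>n x. multilin_bounded n (D n x)) \<and>
      (\<forall>n x. ((\<lambda>y. mlnorm n (\<lambda>v. D n y v - D n x v - D (Suc n) x (v(n := y - x))) / norm (y - x))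
               \<longlongrightarrow> 0) (at x)))"

definition affine_map :: "('a::real_normed_vector \<Rightarrow> 'b::real_normed_vector) \<Rightarrow> bool" where
  "affine_map A \<longleftrightarrow> (\<exists>L b. bounded_linear L \<and> A = (\<lambda>y. L y + b))"

text \<open>f \<sim>_\<chi> g : \<chi>'(y) f(y) = g(\<chi>(y)) for all y, with \<chi>'(y) the Gateaux derivative,
  i.e. the directional derivative of \<chi> at y in direction f(y) exists and equals g(\<chi>(y)).\<close>

definition vf_related :: "('a::real_normed_vector \<Rightarrow> 'b::real_normed_vector) \<Rightarrow> ('a \<Rightarrow> 'a) \<Rightarrow> ('b \<Rightarrow> 'b) \<Rightarrow> bool" where
  "vf_related C f g \<longleftrightarrow>
     (\<forall>y. ((\<lambda>t. (C (y + t *\<^sub>R f y) - C y) /\<^sub>R t) \<longlongrightarrow> g (C y)) (at 0))"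

end

theory Submission
  imports Defs
begin

lemma ml0: "multilin_bounded 0 (\<lambda>v::nat\<Rightarrow>'a::real_normed_vector. (c::'b::real_normed_vector))"
  unfolding multilin_bounded_def
  apply (intro conjI allI impI)
    apply simp
   apply simp
  apply (rule exI[of _ "norm c"])
  apply simp
  done
lemma mlz: "multilin_bounded n (\<lambda>v::nat\<Rightarrow>'a::real_normed_vector. (0::'b::real_normed_vector))"
  unfolding multilin_bounded_def
  apply (intro conjI allI impI)
    apply (rule bounded_linear.linear[OF bounded_linear_zero])
   apply (rule refl)
  apply (rule exI[of _ 0])
  apply simp
  done
lemma mlnorm0: "mlnorm n (\<lambda>v::nat\<Rightarrow>'a::real_normed_vector. (0::'b::real_normed_vector)) = 0"
proof -
  have "(\<lambda>i. 0) \<in> {v::nat\<Rightarrow>'a. \<forall>i<n. norm (v i) \<le> 1}" by simp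
  then have ne: "{v::nat\<Rightarrow>'a. \<forall>i<n. norm (v i) \<le> 1} \<noteq> {}" by (rule ex_in_conv[THEN iffD1, OF exI])
  show ?thesis unfolding mlnorm_def norm_zero by (rule cSUP_const[OF ne])
qed

lemma smooth_const: "smooth (\<lambda>x::'a::real_normed_vector. (c::'b::real_normed_vector))"
proof -
  define D :: "nat \<Rightarrow> 'a \<Rightarrow> (nat \<Rightarrow> 'a) \<Rightarrow> 'b" where
    "D = (\<lambda>n x v. if n = 0 then c else 0)"
  have D0: "D 0 = (\<lambda>x v. c)" unfolding D_def by simp
  have DS: "D (Suc n) = (\<lambda>x v. 0)" for n unfolding D_def by simp
  have ml: "multilin_bounded n (D n x)" for n x
  proof (cases n)
    case 0
    show ?thesis unfolding 0 D0 by (rule ml0)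
  next
    case (Suc m)
    show ?thesis unfolding Suc DS by (rule mlz)
  qed
  have z: "(\<lambda>v. D n y v - D n x v - D (Suc n) x (v(n := y - x))) = (\<lambda>v. 0)" for n x y
  proof (cases n)
    case 0
    then show ?thesis by (simp add: D0 DS)
  next
    case (Suc m)
    then show ?thesis by (simp add: DS)
  qed
  show ?thesis unfolding smooth_def
    apply (rule exI[of _ D])
    apply (intro conjI allI)
      apply (simp add: D0)
     apply (rule ml)
    apply (simp only: z mlnorm0)
    apply simp
    done
qed

lemma tendsto_at0_ev:
  assumes "\<And>t. t \<noteq> 0 \<Longrightarrow> F t = (L::'b::real_normed_vector)"
  shows "(F \<longlongrightarrow> L) (at (0::real))"
proof -
  have "\<forall>\<^sub>F t in at (0::real). L = F t"
    using assms by (auto simp: eventually_at_filter)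
  then show ?thesis by (rule Lim_transform_eventually[OF tendsto_const])
qed

theorem lemma4p8:
  fixes N :: nat
    and \<phi> :: "(nat \<Rightarrow> 'a::banach \<Rightarrow> 'a) \<Rightarrow> 'a \<Rightarrow> 'a"
    and c :: "nat \<Rightarrow> 'a"
  assumes maps_smooth: "\<forall>f. (\<forall>\<nu><N. smooth (f \<nu>)) \<longrightarrow> smooth (\<phi> f)"
    and equivariant: "\<forall>A :: 'a \<Rightarrow> 'a. affine_map A \<longrightarrow>
        (\<forall>f g. (\<forall>\<nu><N. smooth (f \<nu>) \<and> smooth (g \<nu>) \<and> vf_related A (f \<nu>) (g \<nu>))
               \<longrightarrow> vf_related A (\<phi> f) (\<phi> g))"
    and consistent: "\<forall>f. (\<forall>\<nu><N. smooth (f \<nu>)) \<longrightarrow>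
        (\<forall>y. ((\<lambda>h. (\<phi> (\<lambda>\<nu> x. h *\<^sub>R f \<nu> x) y - h *\<^sub>R (\<Sum>\<nu><N. f \<nu> y)) /\<^sub>R h) \<longlongrightarrow> 0) (at 0))"
  shows "\<phi> (\<lambda>\<nu> x. c \<nu>) = (\<lambda>x. \<Sum>\<nu><N. c \<nu>)"
proof -
  define F where "F = (\<lambda>h::real. (\<lambda>\<nu> (x::'a). h *\<^sub>R c \<nu>))"
  have F1: "F 1 = (\<lambda>\<nu> x. c \<nu>)" by (simp add: F_def)
  have smF: "smooth (F h \<nu>)" for h \<nu> unfolding F_def by (rule smooth_const)
  have trans: "\<phi> (F 1) (y + b) = \<phi> (F 1) y" for y b
  proof -
    have aff: "affine_map (\<lambda>y::'a. y + b)" unfolding affine_map_def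
      by (rule exI[of _ id], rule exI[of _ b]) (auto simp: bounded_linear_ident id_def)
    have r: "vf_related (\<lambda>y. y + b) (F 1 \<nu>) (F 1 \<nu>)" for \<nu>
      unfolding vf_related_def F_def
      by (auto intro!: tendsto_at0_ev)
    have p: "\<And>\<nu>. \<nu> < N \<Longrightarrow> smooth (F 1 \<nu>) \<and> smooth (F 1 \<nu>) \<and> vf_related (\<lambda>y. y + b) (F 1 \<nu>) (F 1 \<nu>)"
      using r smF by simp
    have "vf_related (\<lambda>y. y + b) (\<phi> (F 1)) (\<phi> (F 1))"
      using equivariant[rule_format, OF aff p] .
    then have l: "((\<lambda>t. ((y + t *\<^sub>R \<phi> (F 1) y + b) - (y + b)) /\<^sub>R t) \<longlongrightarrow> \<phi> (F 1) (y + b)) (at 0)"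
      unfolding vf_related_def by blast
    have l2: "((\<lambda>t. ((y + t *\<^sub>R \<phi> (F 1) y + b) - (y + b)) /\<^sub>R t) \<longlongrightarrow> \<phi> (F 1) y) (at (0::real))"
      by (rule tendsto_at0_ev) auto
    show ?thesis using tendsto_unique[OF trivial_limit_at l l2] .
  qed
  define w where "w = \<phi> (F 1) 0"
  have const: "\<phi> (F 1) y = w" for y
    using trans[of 0 y] by (simp add: w_def)
  have scal: "\<phi> (F h) 0 = h *\<^sub>R w" if "h \<noteq> 0" for h
  proof -
    have aff: "affine_map (\<lambda>y::'a. h *\<^sub>R y)" unfolding affine_map_def
      by (rule exI[of _ "\<lambda>y. h *\<^sub>R y"], rule exI[of _ 0]) (simp add: bounded_linear_scaleR_right)
    have r: "vf_related (\<lambda>y. h *\<^sub>R y) (F 1 \<nu>) (F h \<nu>)" for \<nu>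
      unfolding vf_related_def F_def
      by (auto intro!: tendsto_at0_ev simp: scaleR_add_right)
    have p: "\<And>\<nu>. \<nu> < N \<Longrightarrow> smooth (F 1 \<nu>) \<and> smooth (F h \<nu>) \<and> vf_related (\<lambda>y. h *\<^sub>R y) (F 1 \<nu>) (F h \<nu>)"
      using r smF by simp
    have "vf_related (\<lambda>y. h *\<^sub>R y) (\<phi> (F 1)) (\<phi> (F h))"
      using equivariant[rule_format, OF aff p] .
    then have l: "((\<lambda>t. (h *\<^sub>R (0 + t *\<^sub>R \<phi> (F 1) 0) - h *\<^sub>R 0) /\<^sub>R t) \<longlongrightarrow> \<phi> (F h) (h *\<^sub>R 0)) (at 0)"
      unfolding vf_related_def by blast
    have l2: "((\<lambda>t. (h *\<^sub>R (0 + t *\<^sub>R \<phi> (F 1) 0) - h *\<^sub>R 0) /\<^sub>R t) \<longlongrightarrow> h *\<^sub>R w) (at (0::real))"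
      by (rule tendsto_at0_ev) (auto simp: const)
    show ?thesis using tendsto_unique[OF trivial_limit_at l l2] by simp
  qed
  have "((\<lambda>h. (\<phi> (\<lambda>\<nu> x. h *\<^sub>R F 1 \<nu> x) 0 - h *\<^sub>R (\<Sum>\<nu><N. F 1 \<nu> 0)) /\<^sub>R h) \<longlongrightarrow> 0) (at 0)"
  proof -
    have pre: "\<forall>\<nu><N. smooth (F 1 \<nu>)" using smF by blast
    show ?thesis using spec[OF mp[OF spec[OF consistent, of "F 1"] pre], of 0] .
  qed
  moreover have eqF: "(\<lambda>\<nu> x. h *\<^sub>R F 1 \<nu> x) = F h" for h by (simp add: F_def)
  moreover have "(\<Sum>\<nu><N. F 1 \<nu> 0) = (\<Sum>\<nu><N. c \<nu>)" by (simp add: F_def)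
  ultimately have l: "((\<lambda>h. (\<phi> (F h) 0 - h *\<^sub>R (\<Sum>\<nu><N. c \<nu>)) /\<^sub>R h) \<longlongrightarrow> 0) (at (0::real))"
    by (simp only:)
  have l2: "((\<lambda>h. (\<phi> (F h) 0 - h *\<^sub>R (\<Sum>\<nu><N. c \<nu>)) /\<^sub>R h) \<longlongrightarrow> w - (\<Sum>\<nu><N. c \<nu>)) (at (0::real))"
  proof (rule tendsto_at0_ev)
    fix h :: real assume h: "h \<noteq> 0"
    have "\<phi> (F h) 0 - h *\<^sub>R (\<Sum>\<nu><N. c \<nu>) = h *\<^sub>R (w - (\<Sum>\<nu><N. c \<nu>))"
      unfolding scal[OF h] by (rule scaleR_diff_right[symmetric])
    then show "(\<phi> (F h) 0 - h *\<^sub>R (\<Sum>\<nu><N. c \<nu>)) /\<^sub>R h = w - (\<Sum>\<nu><N. c \<nu>)"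
      using h by simp
  qed
  have "w = (\<Sum>\<nu><N. c \<nu>)" using tendsto_unique[OF trivial_limit_at l l2] by simp
  then have "\<phi> (F 1) x = (\<Sum>\<nu><N. c \<nu>)" for x using const[of x] by simp
  then show ?thesis unfolding F1[symmetric] by (rule ext)
qed

end
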